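(* There exists an orthogonal design $OD\big(2^{10};\ 2^6_{(16)}\big)$, i.e. a $2^{10}\times2^{10}$ matrix $X$ with entries in $\{0,\pm z_1,\ldots,\pm z_{16}\}$ such that $XX^{\rm T}=\big(2^6\sum_{i=1}^{16}z_i^2\big)I_{2^{10}}$.
   Context: The notation $u_{(k)}$ in a type means that $u$ is repeated $k$ times. $z_1,\ldots,z_{16}$ are commuting indeterminates. An orthogonal design $OD(m;c_1,\ldots,c_k)$ is an $m\times m$ matrix with entries from $\{0,\pm z_1,\ldots,\pm z_k\}$ satisfying $XX^{\rm T}=(\sum_j c_jz_j^2)I_m$. *)

theory Defs
  imports Complex_Main
begin

text \<open>An entry of an orthogonal design is encoded as a pair (c, t) with
  c \<in> {-1,0,1} and 1 \<le> t \<le> k, standing for the formal entry c * z_t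
  (so c = 0 encodes the zero entry, c = 1 encodes z_t, c = -1 encodes -z_t).\<close>

definition od_entry_val :: "(nat \<Rightarrow> real) \<Rightarrow> int \<times> nat \<Rightarrow> real" where
  "od_entry_val z e = real_of_int (fst e) * z (snd e)"

text \<open>orthogonal_design m cs X: X is an m x m matrix (indices 0..m-1) with entries
  in {0, \<plusminus>z_1, ..., \<plusminus>z_k}, k = length cs, and X X^T = (\<Sum>_j c_j z_j^2) I_m
  as an identity of polynomials in the commuting indeterminates z_1..z_k; this
  polynomial identity is expressed by requiring it for every real assignment of
  the indeterminates (equivalent, since the reals are an infinite field).\<close>

definition orthogonal_design :: "nat \<Rightarrow> nat list \<Rightarrow> (nat \<Rightarrow> nat \<Rightarrow> int \<times> nat) \<Rightarrow> bool" where
  "orthogonal_design m cs X \<longleftrightarrow>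
     (\<forall>i<m. \<forall>j<m. fst (X i j) \<in> {-1, 0, 1} \<and> snd (X i j) \<in> {1..length cs}) \<and>
     (\<forall>z :: nat \<Rightarrow> real. \<forall>i<m. \<forall>j<m.
        (\<Sum>l<m. od_entry_val z (X i l) * od_entry_val z (X j l)) =
        (if i = j then (\<Sum>t\<in>{1..length cs}. real (cs ! (t - 1)) * (z t)\<^sup>2) else 0))"

end

theory Submission imports Defs begin
unbundle bit_operations_syntax
fun hs :: "nat \<Rightarrow> nat \<Rightarrow> nat \<Rightarrow> int" where
  "hs 0 x y = 1"
| "hs (Suc n) x y = (if odd x \<and> odd y then -1 else 1) * hs n (x div 2) (y div 2)"
definition za :: "nat list" where "za = [0, 0, 2, 16, 26, 59, 26, 24, 21, 61, 13, 38, 6, 3, 60, 39]"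
definition xa :: "nat list" where "xa = [0, 53, 31, 2, 60, 60, 35, 26, 11, 41, 41, 35, 23, 29, 36, 27]"
definition bl :: "nat list" where "bl = [0, 1, 2, 3, 0, 1, 2, 3, 13, 12, 15, 14, 13, 12, 15, 14]"
definition ll :: "nat list" where "ll = [6, 10, 13, 4, 3, 7, 11, 15, 14, 5, 11, 13, 13, 13, 11, 3]"

lemma list_all_upt: "list_all P [0..<n] \<longleftrightarrow> (\<forall>a<n. P a)"
  by (auto simp: list_all_iff)

lemma xor_lt: "(x::nat) < 2^n \<Longrightarrow> y < 2^n \<Longrightarrow> x XOR y < 2^n"
  by (metis take_bit_nat_eq_self_iff take_bit_xor)

lemma xor_cancel_r [simp]: "((x::nat) XOR y) XOR y = x"
  by (simp add: xor.assoc)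

lemma xor_cancel_l [simp]: "(y::nat) XOR (y XOR x) = x"
  by (simp add: xor.assoc[symmetric])

lemma xor_eq_iff: "((x::nat) XOR y = z) \<longleftrightarrow> (x = z XOR y)"
  by auto

lemma xor_eq_0_iff: "((x::nat) XOR y = 0) \<longleftrightarrow> x = y"
  by (metis xor_cancel_r xor.left_neutral xor_self_eq)

lemma xor_div2: "((x::nat) XOR y) div 2 = x div 2 XOR y div 2"
  using xor_rec[of x y] by simp

lemma hs_xor1: "hs n (x XOR x') y = hs n x y * hs n x' y"
proof (induction n arbitrary: x x' y)
  case 0 then show ?case by simp
next
  case (Suc n)
  show ?case by (simp add: Suc xor_div2 even_xor_iff)
qed

lemma hs_sym: "hs n x y = hs n y x"
  by (induction n arbitrary: x y) auto

lemma hs_xor2: "hs n y (x XOR x') = hs n y x * hs n y x'"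
  by (metis hs_sym hs_xor1)

lemma hs_sq: "hs n x y * hs n x y = 1"
  by (induction n arbitrary: x y) auto

lemma hs_pm: "hs n x y = 1 \<or> hs n x y = -1"
  by (induction n arbitrary: x y) auto

lemma sum_split2: "(\<Sum>y<2*m. f y) = (\<Sum>y<m. f (2*y) + f (2*y+1))" for f :: "nat \<Rightarrow> 'a::comm_monoid_add"
proof (induction m)
  case 0 then show ?case by simp
next
  case (Suc m)
  have "2 * Suc m = Suc (Suc (2*m))" by simp
  then show ?case using Suc by (simp add: add.assoc)
qed

lemma hs_sum: "c < 2^n \<Longrightarrow> (\<Sum>y<2^n. hs n c y) = (if c = 0 then 2^n else 0)"
proof (induction n arbitrary: c)
  case 0 then show ?case by simp
next
  case (Suc n)
  have "(\<Sum>y<2^Suc n. hs (Suc n) c y) = (\<Sum>y<2^n. hs (Suc n) c (2*y) + hs (Suc n) c (2*y+1))"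
    using sum_split2[of "hs (Suc n) c" "2^n"] by simp
  also have "\<dots> = (\<Sum>y<2^n. (1 + (if odd c then -1 else 1)) * hs n (c div 2) y)"
    by (intro sum.cong) (auto simp: algebra_simps)
  also have "\<dots> = (1 + (if odd c then -1 else 1)) * (\<Sum>y<2^n. hs n (c div 2) y)"
    by (simp add: sum_distrib_left)
  also have "\<dots> = (if c = 0 then 2^Suc n else 0)"
  proof -
    have "c div 2 < 2^n" using Suc.prems by auto
    then show ?thesis using Suc.IH[of "c div 2"] by auto
  qed
  finally show ?case .
qed


lemma sum_prod_split: "(\<Sum>l<m*n. f l) = (\<Sum>l1<m. \<Sum>l2<n. f (l1*n + l2))" for f :: "nat \<Rightarrow> 'a::comm_monoid_add"
proof (induction m)
  case 0 then show ?case by simp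
next
  case (Suc m)
  have "(\<Sum>l<Suc m*n. f l) = (\<Sum>l<m*n. f l) + (\<Sum>l\<in>{m*n..<m*n+n}. f l)"
    by (simp add: add.commute sum.atLeastLessThan_concat[symmetric] lessThan_atLeast0 )
  also have "(\<Sum>l\<in>{m*n..<m*n+n}. f l) = (\<Sum>l2<n. f (m*n + l2))"
  proof -
    have "(\<Sum>l\<in>{0+m*n..<n+m*n}. f l) = (\<Sum>l2\<in>{0..<n}. f (l2 + m*n))"
      by (rule sum.shift_bounds_nat_ivl)
    then show ?thesis by (simp add: lessThan_atLeast0 add.commute)
  qed
  finally show ?case using Suc by simp
qed

lemma invol_sum_zero:
  assumes "finite A" "\<And>x. x \<in> A \<Longrightarrow> g x \<in> A" "\<And>x. x \<in> A \<Longrightarrow> g (g x) = x"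
    "\<And>x. x \<in> A \<Longrightarrow> f (g x) = - f x"
  shows "sum f A = (0::real)"
proof -
  have "sum f A = sum (f \<circ> g) A"
    by (rule sum.reindex_bij_witness[of A g g]) (auto simp: assms)
  also have "\<dots> = - sum f A" by (simp add: assms sum_negf)
  finally show ?thesis by simp
qed


lemma chkR_list: "list_all (\<lambda>a. list_all (\<lambda>b. a = b \<or> hs 4 (a XOR b) (bl!(a XOR b) XOR ll!a XOR ll!b) * hs 6 (za!a) (xa!a XOR xa!b) = - hs 6 (za!b) (xa!a XOR xa!b)) [0..<16]) [0..<16]"
  by code_simp
lemma chkR: "\<forall>a<16. \<forall>b<16. a \<noteq> b \<longrightarrow> hs 4 (a XOR b) (bl!(a XOR b) XOR ll!a XOR ll!b) * hs 6 (za!a) (xa!a XOR xa!b) = - hs 6 (za!b) (xa!a XOR xa!b)"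
  using chkR_list unfolding list_all_upt by blast
lemma chkL_list: "list_all (\<lambda>l. list_all (\<lambda>u. bl!(l XOR u) = bl!l XOR bl!u) [0..<16]) [0..<16]"
  by code_simp
lemma chkL: "\<forall>l<16. \<forall>u<16. bl!(l XOR u) = bl!l XOR bl!u"
  using chkL_list unfolding list_all_upt by blast
lemma chkX_list: "list_all (\<lambda>a. xa!a < 64) [0..<16]"
  by code_simp
lemma chkX: "\<forall>a<16. xa!a < 64"
  using chkX_list unfolding list_all_upt by blast

definition sg :: "nat \<Rightarrow> nat \<Rightarrow> int" where
  "sg i j = hs 4 i (bl!j XOR ll!(i XOR j))"

definition Xm :: "nat \<Rightarrow> nat \<Rightarrow> int \<times> nat" where
  "Xm i j = (sg (i div 64) (j div 64) * hs 6 (za!((i div 64) XOR (j div 64))) (i mod 64)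
      * hs 6 ((i mod 64) XOR xa!((i div 64) XOR (j div 64))) (j mod 64), ((i div 64) XOR (j div 64)) + 1)"

definition T :: "(nat \<Rightarrow> real) \<Rightarrow> nat \<Rightarrow> nat \<Rightarrow> nat \<Rightarrow> nat \<Rightarrow> nat \<Rightarrow> real" where
  "T z i1 i2 k1 k2 l1 = of_int (sg i1 l1 * sg k1 l1 * hs 6 (za!(i1 XOR l1)) i2 * hs 6 (za!(k1 XOR l1)) k2)
     * z ((i1 XOR l1)+1) * z ((k1 XOR l1)+1)
     * (if (i2 XOR xa!(i1 XOR l1)) = (k2 XOR xa!(k1 XOR l1)) then 1 else 0)"

lemma rowsum:
  assumes "i1<16" "k1<16" "i2<64" "k2<64"
  shows "(\<Sum>l<1024. od_entry_val z (Xm (64*i1+i2) l) * od_entry_val z (Xm (64*k1+k2) l))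
       = 64 * (\<Sum>l1<16. T z i1 i2 k1 k2 l1)"
proof -
  let ?F = "\<lambda>l. od_entry_val z (Xm (64*i1+i2) l) * od_entry_val z (Xm (64*k1+k2) l)"
  have "(\<Sum>l<1024. ?F l) = (\<Sum>l1<16. \<Sum>l2<64. ?F (l1*64+l2))"
    using sum_prod_split[of ?F 16 64] by simp
  also have "\<dots> = (\<Sum>l1<16. 64 * T z i1 i2 k1 k2 l1)"
  proof (rule sum.cong[OF refl])
    fix l1 assume l1: "l1 \<in> {..<16::nat}"
    define a where "a = i1 XOR l1"
    define b where "b = k1 XOR l1"
    define p where "p = i2 XOR xa!a"
    define q where "q = k2 XOR xa!b"
    define C where "C = of_int (sg i1 l1 * sg k1 l1 * hs 6 (za!a) i2 * hs 6 (za!b) k2) * z (a+1) * z (b+1)"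
    have a16: "a < 16" unfolding a_def using xor_lt[of i1 4 l1] assms l1 by simp
    have b16: "b < 16" unfolding b_def using xor_lt[of k1 4 l1] assms l1 by simp
    have p64: "p < 64" unfolding p_def using xor_lt[of i2 6 "xa!a"] assms chkX a16 by simp
    have q64: "q < 64" unfolding q_def using xor_lt[of k2 6 "xa!b"] assms chkX b16 by simp
    have pq: "p XOR q < 2^6" using xor_lt[of p 6 q] p64 q64 by simp
    have dv: "\<And>x y::nat. y < 64 \<Longrightarrow> (64*x+y) div 64 = x" by simp
    have md: "\<And>x y::nat. y < 64 \<Longrightarrow> (64*x+y) mod 64 = y" by simp
    have "\<And>l2. l2 < 64 \<Longrightarrow> ?F (l1*64+l2) = C * of_int (hs 6 (p XOR q) l2)"
    proof -
      fix l2 :: nat assume l2: "l2 < 64"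
      have e1: "(l1*64+l2) div 64 = l1" "(l1*64+l2) mod 64 = l2" using l2 by auto
      have e2: "(64*i1+i2) div 64 = i1" "(64*i1+i2) mod 64 = i2" "(64*k1+k2) div 64 = k1" "(64*k1+k2) mod 64 = k2"
        using assms by auto
      show "?F (l1*64+l2) = C * of_int (hs 6 (p XOR q) l2)"
        unfolding od_entry_val_def Xm_def e1 e2 C_def hs_xor1 p_def q_def a_def b_def
        by (simp add: algebra_simps)
    qed
    then have "(\<Sum>l2<64. ?F (l1*64+l2)) = (\<Sum>l2<64. C * of_int (hs 6 (p XOR q) l2))"
      by (intro sum.cong) auto
    also have "\<dots> = C * of_int (\<Sum>l2<2^6. hs 6 (p XOR q) l2)"
      by (simp add: sum_distrib_left)
    also have "\<dots> = C * (if p = q then 64 else 0)"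
      using hs_sum[OF pq] by (simp add: xor_eq_0_iff)
    also have "\<dots> = 64 * T z i1 i2 k1 k2 l1"
      unfolding T_def C_def p_def q_def a_def b_def by simp
    finally show "(\<Sum>l2<64. ?F (l1*64+l2)) = 64 * T z i1 i2 k1 k2 l1" .
  qed
  also have "\<dots> = 64 * (\<Sum>l1<16. T z i1 i2 k1 k2 l1)" by (simp add: sum_distrib_left)
  finally show ?thesis .
qed


lemma xa_lt: "a < 16 \<Longrightarrow> xa!a < 64" using chkX by simp

lemma sg_ratio:
  assumes "i1 < 16" "k1 < 16" "l1 < 16"
  shows "sg i1 (l1 XOR (i1 XOR k1)) * sg k1 (l1 XOR (i1 XOR k1))
       = hs 4 ((i1 XOR l1) XOR (k1 XOR l1)) (bl!((i1 XOR l1) XOR (k1 XOR l1)) XOR ll!(i1 XOR l1) XOR ll!(k1 XOR l1))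
         * (sg i1 l1 * sg k1 l1)"
proof -
  define a where "a = i1 XOR l1"
  define b where "b = k1 XOR l1"
  define u where "u = i1 XOR k1"
  define Y where "Y = bl!u XOR ll!a XOR ll!b"
  have u16: "u < 16" unfolding u_def using xor_lt[of i1 4 k1] assms by simp
  have ab: "a XOR b = u" unfolding a_def b_def u_def by (simp add: ac_simps)
  have ia: "i1 XOR (l1 XOR u) = b" unfolding b_def u_def by (simp add: ac_simps)
  have kb: "k1 XOR (l1 XOR u) = a" unfolding a_def u_def by (simp add: ac_simps)
  have bl: "bl!(l1 XOR u) = bl!l1 XOR bl!u" using chkL assms u16 by simp
  have s1: "sg i1 (l1 XOR u) = hs 4 i1 Y * sg i1 l1"
  proof -
    have "bl!(l1 XOR u) XOR ll!b = Y XOR (bl!l1 XOR ll!a)"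
      unfolding bl Y_def by (simp add: ac_simps)
    then show ?thesis unfolding sg_def ia by (simp add: hs_xor2 a_def)
  qed
  have s2: "sg k1 (l1 XOR u) = hs 4 k1 Y * sg k1 l1"
  proof -
    have "bl!(l1 XOR u) XOR ll!a = Y XOR (bl!l1 XOR ll!b)"
      unfolding bl Y_def by (simp add: ac_simps)
    then show ?thesis unfolding sg_def kb by (simp add: hs_xor2 b_def)
  qed
  have "sg i1 (l1 XOR u) * sg k1 (l1 XOR u) = (hs 4 i1 Y * hs 4 k1 Y) * (sg i1 l1 * sg k1 l1)"
    unfolding s1 s2 by (simp add: ac_simps)
  also have "hs 4 i1 Y * hs 4 k1 Y = hs 4 u Y" unfolding u_def by (simp add: hs_xor1)
  finally show ?thesis unfolding ab u_def[symmetric] a_def[symmetric] b_def[symmetric] Y_def .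
qed

lemma T_invol:
  assumes "i1 < 16" "k1 < 16" "l1 < 16" "i1 \<noteq> k1"
  shows "T z i1 i2 k1 k2 (l1 XOR (i1 XOR k1)) = - T z i1 i2 k1 k2 l1"
proof -
  define a where "a = i1 XOR l1"
  define b where "b = k1 XOR l1"
  define R where "R = hs 4 (a XOR b) (bl!(a XOR b) XOR ll!a XOR ll!b)"
  define S where "S = sg i1 l1 * sg k1 l1"
  have a16: "a < 16" unfolding a_def using xor_lt[of i1 4 l1] assms by simp
  have b16: "b < 16" unfolding b_def using xor_lt[of k1 4 l1] assms by simp
  have anb: "a \<noteq> b" unfolding a_def b_def using assms(4) by (metis xor_cancel_r)
  have ia: "i1 XOR (l1 XOR (i1 XOR k1)) = b" unfolding b_def by (simp add: ac_simps)
  have kb: "k1 XOR (l1 XOR (i1 XOR k1)) = a" unfolding a_def by (simp add: ac_simps)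
  have rat: "sg i1 (l1 XOR (i1 XOR k1)) * sg k1 (l1 XOR (i1 XOR k1)) = R * S"
    using sg_ratio[OF assms(1-3)] unfolding R_def S_def a_def b_def .
  show ?thesis
  proof (cases "(i2 XOR xa!a) = (k2 XOR xa!b)")
    case False
    have "(i2 XOR xa!b) \<noteq> (k2 XOR xa!a)"
      using False by (metis xor_eq_iff xor.assoc xor.commute)
    then show ?thesis using False unfolding T_def ia kb a_def[symmetric] b_def[symmetric] by simp
  next
    case True
    define c where "c = xa!a XOR xa!b"
    have k2: "k2 = i2 XOR c" unfolding c_def using True by (metis xor_eq_iff xor.assoc)
    have True': "(i2 XOR xa!b) = (k2 XOR xa!a)" unfolding k2 c_def by (simp add: ac_simps)
    have chk: "R * hs 6 (za!a) c = - hs 6 (za!b) c"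
      using chkR a16 b16 anb unfolding R_def c_def by simp
    have "T z i1 i2 k1 k2 (l1 XOR (i1 XOR k1))
        = of_int (R * S * hs 6 (za!b) i2 * (hs 6 (za!a) i2 * hs 6 (za!a) c)) * z (b+1) * z (a+1)"
      unfolding T_def ia kb using True' rat by (simp add: k2 hs_xor2 mult.assoc)
    also have "R * S * hs 6 (za!b) i2 * (hs 6 (za!a) i2 * hs 6 (za!a) c)
        = S * hs 6 (za!b) i2 * hs 6 (za!a) i2 * (R * hs 6 (za!a) c)" by (simp add: ac_simps)
    also have "\<dots> = - (S * hs 6 (za!a) i2 * (hs 6 (za!b) i2 * hs 6 (za!b) c))"
      unfolding chk by (simp add: ac_simps)
    also have "of_int (- (S * hs 6 (za!a) i2 * (hs 6 (za!b) i2 * hs 6 (za!b) c))) * z (b+1) * z (a+1)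
        = - T z i1 i2 k1 k2 l1"
      unfolding T_def a_def[symmetric] b_def[symmetric] S_def using True by (simp add: k2 hs_xor2 ac_simps)
    finally show ?thesis .
  qed
qed


lemma off_zero:
  assumes "i1 < 16" "k1 < 16" "i1 \<noteq> k1"
  shows "(\<Sum>l1<16. T z i1 i2 k1 k2 l1) = 0"
proof (rule invol_sum_zero[where g = "\<lambda>l. l XOR (i1 XOR k1)"])
  have u: "i1 XOR k1 < 2^4" using xor_lt[of i1 4 k1] assms by simp
  show "\<And>x. x \<in> {..<16} \<Longrightarrow> x XOR (i1 XOR k1) \<in> {..<16}"
    using xor_lt[of _ 4 "i1 XOR k1"] u by simp
  show "\<And>x. x \<in> {..<16} \<Longrightarrow> (x XOR (i1 XOR k1)) XOR (i1 XOR k1) = x"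
    by simp
  show "\<And>x. x \<in> {..<16} \<Longrightarrow> T z i1 i2 k1 k2 (x XOR (i1 XOR k1)) = - T z i1 i2 k1 k2 x"
    using T_invol assms by simp
qed simp

lemma block_zero:
  assumes "i2 \<noteq> k2"
  shows "T z i1 i2 i1 k2 l1 = 0"
proof -
  have "(i2 XOR xa!(i1 XOR l1)) \<noteq> (k2 XOR xa!(i1 XOR l1))"
  proof
    assume "(i2 XOR xa!(i1 XOR l1)) = (k2 XOR xa!(i1 XOR l1))"
    then have "(i2 XOR xa!(i1 XOR l1)) XOR xa!(i1 XOR l1) = (k2 XOR xa!(i1 XOR l1)) XOR xa!(i1 XOR l1)" by simp
    then show False using assms by simp
  qed
  then show ?thesis unfolding T_def by simp
qed

lemma sg_sq: "sg i j * sg i j = 1" unfolding sg_def by (rule hs_sq)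

lemma diag:
  assumes "i1 < 16"
  shows "64 * (\<Sum>l1<16. T z i1 i2 i1 i2 l1)
       = (\<Sum>t\<in>{1..length (replicate 16 (2^6::nat))}. real (replicate 16 (2 ^ 6) ! (t - 1)) * (z t)\<^sup>2)"
proof -
  have "\<And>l1. T z i1 i2 i1 i2 l1 = (z ((i1 XOR l1)+1))\<^sup>2"
  proof -
    fix l1
    have "sg i1 l1 * sg i1 l1 * hs 6 (za!(i1 XOR l1)) i2 * hs 6 (za!(i1 XOR l1)) i2 = 1"
      using sg_sq hs_sq by (metis mult.assoc mult_1)
    then show "T z i1 i2 i1 i2 l1 = (z ((i1 XOR l1)+1))\<^sup>2"
      unfolding T_def by (simp add: power2_eq_square)
  qed
  then have "(\<Sum>l1<16. T z i1 i2 i1 i2 l1) = (\<Sum>l1<16. (z ((i1 XOR l1)+1))\<^sup>2)" by simp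
  also have "\<dots> = (\<Sum>t<16. (z (t+1))\<^sup>2)"
  proof (rule sum.reindex_bij_witness[where i = "\<lambda>t. i1 XOR t" and j = "\<lambda>l. i1 XOR l"])
    fix a :: nat assume "a \<in> {..<16}"
    then show "i1 XOR a \<in> {..<16}" using xor_lt[of i1 4 a] assms by simp
  next
    fix a :: nat assume "a \<in> {..<16}"
    then show "i1 XOR a \<in> {..<16}" using xor_lt[of i1 4 a] assms by simp
  qed auto
  also have "\<dots> = (\<Sum>t\<in>{1..16}. (z t)\<^sup>2)"
  proof -
    have "{1..16::nat} = Suc ` {..<16}"
    proof -
      have "{..<16::nat} = {0..15}" by auto
      then show ?thesis by simp
    qed
    then show ?thesis by (simp add: sum.reindex)
  qed
  finally have e: "(\<Sum>l1<16. T z i1 i2 i1 i2 l1) = (\<Sum>t\<in>{1..16}. (z t)\<^sup>2)" .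
  have "(\<Sum>t\<in>{1..16}. real (replicate 16 (2^6::nat) ! (t-1)) * (z t)\<^sup>2) = (\<Sum>t\<in>{1..16}. 64 * (z t)\<^sup>2)"
    by (intro sum.cong) auto
  then show ?thesis using e by (simp add: sum_distrib_left)
qed

theorem theorem5p3:
  shows "\<exists>X. orthogonal_design (2 ^ 10) (replicate 16 (2 ^ 6)) X"
proof (intro exI[of _ Xm])
  have ent: "\<forall>i<2^10. \<forall>j<2^10. fst (Xm i j) \<in> {-1, 0, 1} \<and> snd (Xm i j) \<in> {1..length (replicate 16 (2 ^ 6::nat))}"
  proof (intro allI impI)
    fix i j :: nat assume i: "i < 2^10" and j: "j < 2^10"
    have "i div 64 < 2^4" "j div 64 < 2^4" using i j by auto
    then have a: "(i div 64) XOR (j div 64) < 16" using xor_lt[of "i div 64" 4 "j div 64"] by simp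
    have pm: "\<And>x y::int. (x = 1 \<or> x = -1) \<Longrightarrow> (y = 1 \<or> y = -1) \<Longrightarrow> (x*y = 1 \<or> x*y = -1)" by auto
    have "fst (Xm i j) = 1 \<or> fst (Xm i j) = -1"
      unfolding Xm_def fst_conv sg_def by (intro pm hs_pm)
    moreover have "snd (Xm i j) = ((i div 64) XOR (j div 64)) + 1" unfolding Xm_def by simp
    ultimately show "fst (Xm i j) \<in> {-1, 0, 1} \<and> snd (Xm i j) \<in> {1..length (replicate 16 (2 ^ 6::nat))}"
      using a by auto
  qed
  have orth: "\<forall>z :: nat \<Rightarrow> real. \<forall>i<2^10. \<forall>j<2^10.
        (\<Sum>l<2^10. od_entry_val z (Xm i l) * od_entry_val z (Xm j l)) =
        (if i = j then (\<Sum>t\<in>{1..length (replicate 16 (2^6::nat))}. real (replicate 16 (2^6) ! (t - 1)) * (z t)\<^sup>2) else 0)"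
  proof (intro allI impI)
    fix z :: "nat \<Rightarrow> real" and i k :: nat assume i: "i < 2^10" and k: "k < 2^10"
    define i1 where "i1 = i div 64"
    define i2 where "i2 = i mod 64"
    define k1 where "k1 = k div 64"
    define k2 where "k2 = k mod 64"
    have ie: "i = 64*i1+i2" and ke: "k = 64*k1+k2" unfolding i1_def i2_def k1_def k2_def by auto
    have b: "i1 < 16" "k1 < 16" "i2 < 64" "k2 < 64" using i k unfolding i1_def i2_def k1_def k2_def by auto
    have rs: "(\<Sum>l<2^10. od_entry_val z (Xm i l) * od_entry_val z (Xm k l)) = 64 * (\<Sum>l1<16. T z i1 i2 k1 k2 l1)"
      using rowsum[OF b, of z] unfolding ie ke by simp
    show "(\<Sum>l<2^10. od_entry_val z (Xm i l) * od_entry_val z (Xm k l)) =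
        (if i = k then (\<Sum>t\<in>{1..length (replicate 16 (2^6::nat))}. real (replicate 16 (2^6) ! (t - 1)) * (z t)\<^sup>2) else 0)"
    proof (cases "i = k")
      case True
      then have kk: "k1 = i1" "k2 = i2" unfolding i1_def i2_def k1_def k2_def by auto
      have "(\<Sum>l<2^10. od_entry_val z (Xm i l) * od_entry_val z (Xm k l)) = 64 * (\<Sum>l1<16. T z i1 i2 i1 i2 l1)"
        using rs unfolding kk .
      also have "\<dots> = (\<Sum>t\<in>{1..length (replicate 16 (2^6::nat))}. real (replicate 16 (2^6) ! (t - 1)) * (z t)\<^sup>2)"
        by (rule diag[OF b(1)])
      finally have F: "(\<Sum>l<2^10. od_entry_val z (Xm i l) * od_entry_val z (Xm k l)) = (\<Sum>t\<in>{1..length (replicate 16 (2^6::nat))}. real (replicate 16 (2^6) ! (t - 1)) * (z t)\<^sup>2)" .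
      show ?thesis unfolding if_P[OF True] by (rule F)
    next
      case False
      show ?thesis
      proof (cases "i1 = k1")
        case True
        have "i2 \<noteq> k2"
        proof
          assume "i2 = k2"
          then have "i = k" using ie ke True by simp
          then show False using False by simp
        qed
        then have "\<And>l1. T z i1 i2 k1 k2 l1 = 0" using block_zero True by simp
        then show ?thesis using rs False by simp
      next
        case ne: False
        have "(\<Sum>l1<16. T z i1 i2 k1 k2 l1) = 0" by (rule off_zero[OF b(1,2) ne])
        then show ?thesis using rs False by simp
      qed
    qed
  qed
  show "orthogonal_design (2 ^ 10) (replicate 16 (2 ^ 6)) Xm"
    unfolding orthogonal_design_def by (rule conjI[OF ent orth])
qed

end
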